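(* Assume $X_t>0$ and $Y_t>0$ for all $t\in\mathcal T$, let $\alpha=\sum_{t}Y_t/X_t$, and for $\delta\in[0,1]$ and a probability vector $\boldsymbol p$ on $\mathcal T$ let $\mathrm{UB}(\delta,\boldsymbol p)=1-\delta+\frac{\delta^2}{2}\sum_tp_t^2\frac{X_t}{Y_t}$. Then $$\min_{\delta\in[0,1],\ \boldsymbol p\in\Delta(\mathcal T)}\mathrm{UB}(\delta,\boldsymbol p)=L(\alpha),$$ attained at $p_t=\frac{Y_t/X_t}{\alpha}$ and $\delta=\min\{\alpha,1\}$. Consequently, in the weakest-link game, any strategy $F^*_{\mathcal Y}\in\mathbb F(\boldsymbol Y)$ whose $c$-marginals are, for all $c$ and $\boldsymbol u\in\mathbb R^T_{\ge0}$, $F^*_{\mathcal Y,c}(\boldsymbol u)=1-\alpha+\alpha\sum_t\frac{Y_t/X_t}{\alpha}\min\{\frac{u_t}{2v_cX_t},1\}$ if $\alpha\le1$, and $F^*_{\mathcal Y,c}(\boldsymbol u)=\sum_t\frac{Y_t/X_t}{\alpha}\min\{\frac{u_t}{2v_cX_t\alpha},1\}$ if $\alpha>1$, satisfies $\pi_{\mathcal X}(F_{\mathcal X},F^*_{\mathcal Y})\le L(\alpha)$ for all $F_{\mathcal X}\in\mathbb F(\boldsymbol X)$.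
   Context: Contests $\mathcal C=\{1,\dots,C\}$ with values $v_c>0$, $\sum_cv_c=1$; types $\mathcal T=\{1,\dots,T\}$; $\Delta(\mathcal T)$ is the set of probability vectors on $\mathcal T$. $\mathbb F(\boldsymbol X)$ is the set of probability distributions $F$ on $\mathbb R^{CT}_{\ge0}$ (points $\mathbf x=(\boldsymbol x_c)_c$, $\boldsymbol x_c=(x_{c,t})_t$) with $\mathbb E_{\mathbf x\sim F}[\sum_cx_{c,t}]\le X_t$ for all $t$; similarly $\mathbb F(\boldsymbol Y)$. $c$-marginal: $F_c(\boldsymbol u)=\mathbb P_{\mathbf x\sim F}[x_{c,t}\le u_t\ \forall t]$. Weakest-link rule $W_{\mathrm{WL}}(\boldsymbol x,\boldsymbol y)=\mathbf 1\{x_t\ge y_t\ \forall t\}$; $\pi_{\mathcal X}(F_{\mathcal X},F_{\mathcal Y})=\mathbb E[\sum_cv_cW_{\mathrm{WL}}(\boldsymbol x_c,\boldsymbol y_c)]$ with independent $\mathbf x\sim F_{\mathcal X}$, $\mathbf y\sim F_{\mathcal Y}$. $L(\alpha)=1-\alpha/2$ for $\alpha\le1$, $L(\alpha)=1/(2\alpha)$ for $\alpha>1$. *)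

theory Defs
  imports "HOL-Probability.Probability"
begin

text \<open>Contests are the elements of a finite type 'c, types the elements of a finite
  type 't. A point of R^{CT} is a vector x :: real^'t^'c, with x $ c $ t = x_{c,t}.\<close>

definition L :: "real \<Rightarrow> real" where
  "L \<alpha> = (if \<alpha> \<le> 1 then 1 - \<alpha> / 2 else 1 / (2 * \<alpha>))"

definition prob_simplex :: "('t::finite \<Rightarrow> real) set" where
  "prob_simplex = {p. (\<forall>t. 0 \<le> p t) \<and> (\<Sum>t\<in>UNIV. p t) = 1}"

definition UB :: "('t::finite \<Rightarrow> real) \<Rightarrow> ('t \<Rightarrow> real) \<Rightarrow> real \<Rightarrow> ('t \<Rightarrow> real) \<Rightarrow> real" where
  "UB X Y \<delta> p = 1 - \<delta> + \<delta>\<^sup>2 / 2 * (\<Sum>t\<in>UNIV. (p t)\<^sup>2 * X t / Y t)"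

definition strategies :: "('t::finite \<Rightarrow> real) \<Rightarrow> (real^'t^'c::finite) measure set" where
  "strategies X = {F. prob_space F \<and> sets F = sets borel \<and>
      (AE x in F. \<forall>c t. 0 \<le> x $ c $ t) \<and>
      (\<forall>t. (\<integral>\<^sup>+ x. ennreal (\<Sum>c\<in>UNIV. x $ c $ t) \<partial>F) \<le> ennreal (X t))}"

definition marginal :: "(real^'t::finite^'c::finite) measure \<Rightarrow> 'c \<Rightarrow> real^'t \<Rightarrow> real" where
  "marginal F c u = measure F {x \<in> space F. \<forall>t. x $ c $ t \<le> u $ t}"

definition W_WL :: "real^'t::finite \<Rightarrow> real^'t \<Rightarrow> real" where
  "W_WL x y = (if \<forall>t. y $ t \<le> x $ t then 1 else 0)"

definition payoff_X :: "('c::finite \<Rightarrow> real) \<Rightarrow> (real^'t::finite^'c) measure \<Rightarrow> (real^'t^'c) measure \<Rightarrow> real" where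
  "payoff_X v FX FY = (\<integral>z. (\<Sum>c\<in>UNIV. v c * W_WL (fst z $ c) (snd z $ c)) \<partial>(FX \<Otimes>\<^sub>M FY))"

end

theory Submission
  imports Defs
begin



lemma alg_part:
  fixes X Y :: "'t::finite \<Rightarrow> real" and \<alpha> :: real
  assumes X_pos: "\<forall>t. 0 < X t" and Y_pos: "\<forall>t. 0 < Y t"
    and alpha_def: "\<alpha> = (\<Sum>t\<in>UNIV. Y t / X t)"
  shows "(\<forall>\<delta>\<in>{0..1}. \<forall>p\<in>prob_simplex. L \<alpha> \<le> UB X Y \<delta> p)
    \<and> (\<lambda>t. (Y t / X t) / \<alpha>) \<in> prob_simplex \<and> min \<alpha> 1 \<in> {0..1}
    \<and> UB X Y (min \<alpha> 1) (\<lambda>t. (Y t / X t) / \<alpha>) = L \<alpha>"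
proof -
  have apos: "\<alpha> > 0" unfolding alpha_def
    by (rule sum_pos) (use X_pos Y_pos in auto)
  define q where "q t = (Y t / X t) / \<alpha>" for t
  have qS: "(\<Sum>t\<in>UNIV. (q t)\<^sup>2 * X t / Y t) = 1 / \<alpha>"
  proof -
    have "(\<Sum>t\<in>UNIV. (q t)\<^sup>2 * X t / Y t) = (\<Sum>t\<in>UNIV. (Y t / X t) / \<alpha>^2)"
      by (rule sum.cong) (use X_pos Y_pos apos in \<open>auto simp: q_def power2_eq_square field_simps\<close>)
    also have "\<dots> = (\<Sum>t\<in>UNIV. Y t / X t) / \<alpha>^2" by (rule sum_divide_distrib[symmetric])
    also have "\<dots> = \<alpha> / \<alpha>^2" by (simp only: alpha_def)
    finally show ?thesis using apos by (simp add: power2_eq_square)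
  qed
  have qsimp: "q \<in> prob_simplex"
  proof -
    have "(\<Sum>t\<in>UNIV. q t) = (\<Sum>t\<in>UNIV. Y t / X t) / \<alpha>"
      unfolding q_def by (rule sum_divide_distrib[symmetric])
    then have "(\<Sum>t\<in>UNIV. q t) = 1" using apos alpha_def by simp
    moreover have "\<forall>t. 0 \<le> q t" unfolding q_def using X_pos Y_pos apos
      by (simp add: less_imp_le)
    ultimately show ?thesis unfolding prob_simplex_def by simp
  qed
  have CS: "(\<Sum>t\<in>UNIV. (p t)\<^sup>2 * X t / Y t) \<ge> 1 / \<alpha>" if p: "p \<in> prob_simplex" for p
  proof -
    have p1: "(\<Sum>t\<in>UNIV. p t) = 1" using p by (simp add: prob_simplex_def)
    have "0 \<le> (\<Sum>t\<in>UNIV. (p t - q t)\<^sup>2 * X t / Y t)"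
      by (rule sum_nonneg) (use X_pos Y_pos in \<open>simp add: less_imp_le\<close>)
    also have "\<dots> = (\<Sum>t\<in>UNIV. (p t)\<^sup>2 * X t / Y t) - 2 * (\<Sum>t\<in>UNIV. p t / \<alpha>) + (\<Sum>t\<in>UNIV. (q t)\<^sup>2 * X t / Y t)"
    proof -
      have "(p t - q t)\<^sup>2 * X t / Y t = (p t)\<^sup>2 * X t / Y t - 2 * (p t / \<alpha>) + (q t)\<^sup>2 * X t / Y t" for t
        using X_pos[rule_format, of t] Y_pos[rule_format, of t] apos by (simp add: q_def power2_eq_square field_simps)
      then show ?thesis by (simp add: sum.distrib sum_subtractf sum_distrib_left)
    qed
    also have "\<dots> = (\<Sum>t\<in>UNIV. (p t)\<^sup>2 * X t / Y t) - 1 / \<alpha>"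
      using p1 qS by (simp add: sum_divide_distrib[symmetric])
    finally show ?thesis by simp
  qed
  have part1: "L \<alpha> \<le> UB X Y \<delta> p" if d: "\<delta> \<in> {0..1}" and p: "p \<in> prob_simplex" for \<delta> p
  proof -
    have "\<delta>\<^sup>2 / 2 * (1/\<alpha>) \<le> \<delta>\<^sup>2 / 2 * (\<Sum>t\<in>UNIV. (p t)\<^sup>2 * X t / Y t)"
      by (rule mult_left_mono) (use CS[OF p] in auto)
    moreover have "L \<alpha> \<le> 1 - \<delta> + \<delta>\<^sup>2 / 2 * (1/\<alpha>)"
    proof (cases "\<alpha> \<le> 1")
      case True
      have "0 \<le> (\<delta> - \<alpha>)\<^sup>2 / (2*\<alpha>)" using apos by auto
      also have "(\<delta> - \<alpha>)\<^sup>2 / (2*\<alpha>) = 1 - \<delta> + \<delta>\<^sup>2 / 2 * (1/\<alpha>) - (1 - \<alpha>/2)"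
        using apos by (simp add: power2_eq_square field_simps)
      finally show ?thesis using True by (simp add: L_def)
    next
      case False
      have "0 \<le> (1 - \<delta>) * (2*\<alpha> - 1 - \<delta>) / (2*\<alpha>)" using apos d False by auto
      also have "(1 - \<delta>) * (2*\<alpha> - 1 - \<delta>) / (2*\<alpha>) = 1 - \<delta> + \<delta>\<^sup>2 / 2 * (1/\<alpha>) - 1/(2*\<alpha>)"
        using apos by (simp add: power2_eq_square field_simps)
      finally show ?thesis using False by (simp add: L_def)
    qed
    ultimately show ?thesis unfolding UB_def by linarith
  qed
  have eq: "UB X Y (min \<alpha> 1) q = L \<alpha>"
    unfolding UB_def qS L_def using apos by (auto simp: power2_eq_square field_simps min_def)
  show ?thesis using part1 qsimp eq apos unfolding q_def by auto
qed


lemma W_meas[measurable]: "(\<lambda>z::((real^'t::finite^'c::finite) \<times> (real^'t^'c)). W_WL (fst z $ c) (snd z $ c)) \<in> borel_measurable borel"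
proof -
  have cl: "closed {z::((real^'t^'c) \<times> (real^'t^'c)). \<forall>t. snd z $ c $ t \<le> fst z $ c $ t}"
    by (intro closed_Collect_all closed_Collect_le continuous_intros)
  have "(\<lambda>z::((real^'t::finite^'c::finite) \<times> (real^'t^'c)). W_WL (fst z $ c) (snd z $ c))
      = indicator {z. \<forall>t. snd z $ c $ t \<le> fst z $ c $ t}"
    by (auto simp: W_WL_def indicator_def)
  then show ?thesis using borel_closed[OF cl] by simp
qed

lemma vnth_meas[measurable]: "(\<lambda>x::real^'t::finite^'c::finite. x $ c $ t) \<in> borel_measurable borel"
  by (intro borel_measurable_continuous_onI continuous_intros)

lemma helper1: "(w::real) * (a + b * sum f A) = w * a + (\<Sum>t\<in>A. w * (b * f t))"
  by (simp add: sum_distrib_left distrib_left)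

lemma game_part:
  fixes v :: "'c::finite \<Rightarrow> real" and X Y :: "'t::finite \<Rightarrow> real" and \<alpha> :: real
    and FX FY :: "(real^'t^'c) measure"
  assumes v_pos: "\<forall>c. 0 < v c" and v_sum: "(\<Sum>c\<in>UNIV. v c) = 1"
    and X_pos: "\<forall>t. 0 < X t" and Y_pos: "\<forall>t. 0 < Y t"
    and alpha_def: "\<alpha> = (\<Sum>t\<in>UNIV. Y t / X t)"
    and FY: "FY \<in> strategies Y" and FX: "FX \<in> strategies X"
    and marg: "\<forall>c. \<forall>u::real^'t. (\<forall>t. 0 \<le> u $ t) \<longrightarrow>
            marginal FY c u =
              (if \<alpha> \<le> 1
               then 1 - \<alpha> + \<alpha> * (\<Sum>t\<in>UNIV. (Y t / X t) / \<alpha> * min (u $ t / (2 * v c * X t)) 1)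
               else (\<Sum>t\<in>UNIV. (Y t / X t) / \<alpha> * min (u $ t / (2 * v c * X t * \<alpha>)) 1))"
  shows "payoff_X v FX FY \<le> L \<alpha>"
proof -
  interpret PX: prob_space FX using FX by (simp add: strategies_def)
  interpret PY: prob_space FY using FY by (simp add: strategies_def)
  interpret P: pair_sigma_finite FX FY
    by (simp add: PX.sigma_finite_measure_axioms PY.sigma_finite_measure_axioms pair_sigma_finite.intro)
  interpret PP: prob_space "FX \<Otimes>\<^sub>M FY" by (simp add: PX.prob_space_axioms PY.prob_space_axioms prob_space_pair)
  have sX: "sets FX = sets borel" using FX by (simp add: strategies_def)
  have sY: "sets FY = sets borel" using FY by (simp add: strategies_def)
  have sP: "sets (FX \<Otimes>\<^sub>M FY) = sets borel"
    using sets_pair_measure_cong[OF sX sY] borel_prod by metis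
  define f where "f z = (\<Sum>c\<in>UNIV. v c * W_WL (fst z $ c) (snd z $ c))" for z :: "(real^'t^'c) \<times> (real^'t^'c)"
  have fm: "f \<in> borel_measurable (FX \<Otimes>\<^sub>M FY)"
    unfolding measurable_cong_sets[OF sP refl] f_def by measurable
  have fint: "integrable (FX \<Otimes>\<^sub>M FY) f"
  proof (rule PP.integrable_const_bound[where B=1])
    show "AE x in FX \<Otimes>\<^sub>M FY. norm (f x) \<le> 1"
    proof (intro AE_I2)
      fix z
      have "0 \<le> f z" unfolding f_def W_WL_def using v_pos by (auto intro!: sum_nonneg simp: less_imp_le)
      moreover have "f z \<le> (\<Sum>c\<in>UNIV. v c * 1)"
        unfolding f_def W_WL_def using v_pos by (intro sum_mono) auto
      ultimately show "norm (f z) \<le> 1" using v_sum by simp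
    qed
  qed (rule fm)
  define g where "g x = (\<integral>y. f (x, y) \<partial>FY)" for x
  have pay: "payoff_X v FX FY = (\<integral>x. g x \<partial>FX)"
  proof -
    have "f = (\<lambda>z. \<Sum>c\<in>UNIV. v c * W_WL (fst z $ c) (snd z $ c))" using f_def by (intro ext) simp
    then have "payoff_X v FX FY = integral\<^sup>L (FX \<Otimes>\<^sub>M FY) f" unfolding payoff_X_def by simp
    then show ?thesis unfolding g_def using P.integral_fst'[OF fint] by simp
  qed
  have gint: "integrable FX g" unfolding g_def using P.integrable_fst'[OF fint] .
  have gnn: "0 \<le> g x" for x
    unfolding g_def f_def W_WL_def using v_pos by (auto intro!: integral_nonneg_AE AE_I2 sum_nonneg simp: less_imp_le)
  have apos: "\<alpha> > 0" unfolding alpha_def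
    by (rule sum_pos) (use X_pos Y_pos in auto)
  have gform: "g x = (\<Sum>c\<in>UNIV. v c * marginal FY c (x $ c))" for x
  proof -
    define A where "A c = {y::real^'t^'c. \<forall>t. y $ c $ t \<le> x $ c $ t}" for c
    have Acl: "closed (A c)" for c unfolding A_def
      by (intro closed_Collect_all closed_Collect_le continuous_intros)
    have Am: "A c \<in> sets FY" for c using borel_closed[OF Acl] sY by simp
    have W: "(\<lambda>y. W_WL (x $ c) (y $ c)) = indicator (A c)" for c
      by (auto simp: W_WL_def indicator_def A_def)
    have "g x = (\<integral>y. (\<Sum>c\<in>UNIV. v c * indicator (A c) y) \<partial>FY)"
      unfolding g_def f_def using W by (simp add: fun_eq_iff)
    also have "\<dots> = (\<Sum>c\<in>UNIV. v c * measure FY (A c \<inter> space FY))"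
    proof -
      have "(\<integral>y. (\<Sum>c\<in>UNIV. v c * indicator (A c) y) \<partial>FY) = (\<Sum>c\<in>UNIV. (\<integral>y. v c * indicator (A c) y \<partial>FY))"
      proof (rule Bochner_Integration.integral_sum)
        fix c :: 'c
        have "emeasure FY (A c) < \<infinity>" by (simp add: less_top[symmetric])
        then show "integrable FY (\<lambda>y. v c * indicator (A c) y)" using Am by auto
      qed
      then show ?thesis by simp
    qed
    also have "\<dots> = (\<Sum>c\<in>UNIV. v c * marginal FY c (x $ c))"
      unfolding marginal_def A_def by (intro sum.cong refl arg_cong[where f="\<lambda>s. v _ * measure FY s"]) auto
    finally show ?thesis .
  qed
  define K0 where "K0 = (if \<alpha> \<le> 1 then 1 - \<alpha> else 0)"
  define k where "k t = (if \<alpha> \<le> 1 then (Y t / X t) / (2 * X t) else (Y t / X t) / \<alpha> / (2 * X t * \<alpha>))" for t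
  have K0nn: "0 \<le> K0" unfolding K0_def by auto
  have knn: "0 \<le> k t" for t unfolding k_def using X_pos[rule_format, of t] Y_pos[rule_format, of t] apos by auto
  have Ksum: "K0 + (\<Sum>t\<in>UNIV. k t * X t) = L \<alpha>"
  proof (cases "\<alpha> \<le> 1")
    case True
    have "(\<Sum>t\<in>UNIV. k t * X t) = (\<Sum>t\<in>UNIV. (Y t / X t) / 2)"
      using True X_pos by (intro sum.cong refl) (simp add: k_def field_simps)
    also have "\<dots> = (\<Sum>t\<in>UNIV. Y t / X t) / 2" by (rule sum_divide_distrib[symmetric])
    also have "\<dots> = \<alpha> / 2" by (simp only: alpha_def)
    finally show ?thesis using True by (simp add: K0_def L_def)
  next
    case False
    have "(\<Sum>t\<in>UNIV. k t * X t) = (\<Sum>t\<in>UNIV. (Y t / X t) / (2 * \<alpha>^2))"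
      using False X_pos by (intro sum.cong refl) (simp add: k_def field_simps power2_eq_square)
    also have "\<dots> = (\<Sum>t\<in>UNIV. Y t / X t) / (2 * \<alpha>^2)" by (rule sum_divide_distrib[symmetric])
    also have "\<dots> = \<alpha> / (2 * \<alpha>^2)" by (simp only: alpha_def)
    finally show ?thesis using False apos by (simp add: K0_def L_def power2_eq_square)
  qed
  have percase: "v c * marginal FY c u \<le> v c * K0 + (\<Sum>t\<in>UNIV. k t * u $ t)"
    if u: "\<forall>t. 0 \<le> u $ t" for c u
  proof -
    have vc: "0 < v c" using v_pos by simp
    show ?thesis
    proof (cases "\<alpha> \<le> 1")
      case True
      have tb: "v c * (\<alpha> * ((Y t / X t) / \<alpha> * min (u $ t / (2 * v c * X t)) 1)) \<le> k t * u $ t" for t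
      proof -
        have Xt: "0 < X t" and Yt: "0 < Y t" using X_pos Y_pos by auto
        have "min (u $ t / (2 * v c * X t)) 1 \<le> u $ t / (2 * v c * X t)" by simp
        then have "v c * (Y t / X t) * min (u $ t / (2 * v c * X t)) 1 \<le> v c * (Y t / X t) * (u $ t / (2 * v c * X t))"
          by (rule mult_left_mono) (use vc Xt Yt in simp)
        also have "\<dots> = k t * u $ t" using True vc Xt by (simp add: k_def field_simps)
        finally show ?thesis using apos by (simp add: field_simps)
      qed
      have "v c * marginal FY c u = v c * (1 - \<alpha>) + (\<Sum>t\<in>UNIV. v c * (\<alpha> * ((Y t / X t) / \<alpha> * min (u $ t / (2 * v c * X t)) 1)))"
      proof -
        have m: "marginal FY c u = 1 - \<alpha> + \<alpha> * (\<Sum>t\<in>UNIV. (Y t / X t) / \<alpha> * min (u $ t / (2 * v c * X t)) 1)"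
          using marg u True by simp
        show ?thesis unfolding m by (rule helper1)
      qed
      also have "\<dots> \<le> v c * (1 - \<alpha>) + (\<Sum>t\<in>UNIV. k t * u $ t)"
        using tb by (intro add_left_mono sum_mono) auto
      finally show ?thesis using True by (simp add: K0_def)
    next
      case False
      have tb: "v c * ((Y t / X t) / \<alpha> * min (u $ t / (2 * v c * X t * \<alpha>)) 1) \<le> k t * u $ t" for t
      proof -
        have Xt: "0 < X t" and Yt: "0 < Y t" using X_pos Y_pos by auto
        have "min (u $ t / (2 * v c * X t * \<alpha>)) 1 \<le> u $ t / (2 * v c * X t * \<alpha>)" by simp
        then have "v c * ((Y t / X t) / \<alpha>) * min (u $ t / (2 * v c * X t * \<alpha>)) 1 \<le> v c * ((Y t / X t) / \<alpha>) * (u $ t / (2 * v c * X t * \<alpha>))"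
          by (rule mult_left_mono) (use vc Xt Yt apos in simp)
        also have "\<dots> = k t * u $ t" using False vc Xt apos by (simp add: k_def field_simps)
        finally show ?thesis by (simp add: field_simps)
      qed
      have "v c * marginal FY c u = (\<Sum>t\<in>UNIV. v c * ((Y t / X t) / \<alpha> * min (u $ t / (2 * v c * X t * \<alpha>)) 1))"
        using marg u False by (simp add: sum_distrib_left)
      also have "\<dots> \<le> (\<Sum>t\<in>UNIV. k t * u $ t)"
        using tb by (intro sum_mono) auto
      finally show ?thesis using False by (simp add: K0_def)
    qed
  qed
  have gbound: "g x \<le> K0 + (\<Sum>t\<in>UNIV. k t * (\<Sum>c\<in>UNIV. x $ c $ t))"
    if x: "\<forall>c t. 0 \<le> x $ c $ t" for x
  proof -
    have "g x \<le> (\<Sum>c\<in>UNIV. v c * K0 + (\<Sum>t\<in>UNIV. k t * x $ c $ t))"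
      unfolding gform using x by (intro sum_mono percase) auto
    also have "\<dots> = K0 + (\<Sum>t\<in>UNIV. k t * (\<Sum>c\<in>UNIV. x $ c $ t))"
    proof -
      have "(\<Sum>c\<in>UNIV. v c * K0 + (\<Sum>t\<in>UNIV. k t * x $ c $ t))
          = (\<Sum>c\<in>UNIV. v c) * K0 + (\<Sum>c\<in>UNIV. \<Sum>t\<in>UNIV. k t * x $ c $ t)"
        by (simp only: sum.distrib sum_distrib_right)
      also have "(\<Sum>c\<in>UNIV. \<Sum>t\<in>UNIV. k t * x $ c $ t) = (\<Sum>t\<in>UNIV. \<Sum>c\<in>UNIV. k t * x $ c $ t)"
        by (rule sum.swap)
      also have "\<dots> = (\<Sum>t\<in>UNIV. k t * (\<Sum>c\<in>UNIV. x $ c $ t))"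
        by (simp only: sum_distrib_left)
      finally show ?thesis using v_sum by simp
    qed
    finally show ?thesis .
  qed
  have gm: "g \<in> borel_measurable FX" using gint by auto
  have Sm: "(\<lambda>x. ennreal (\<Sum>c\<in>UNIV. x $ c $ t)) \<in> borel_measurable FX" for t
    unfolding measurable_cong_sets[OF sX refl] by measurable
  have AEnn: "AE x in FX. \<forall>c t. 0 \<le> x $ c $ t" using FX by (simp add: strategies_def)
  have EX: "(\<integral>\<^sup>+ x. ennreal (\<Sum>c\<in>UNIV. x $ c $ t) \<partial>FX) \<le> ennreal (X t)" for t
    using FX by (simp add: strategies_def)
  have Lnn: "0 \<le> L \<alpha>" unfolding Ksum[symmetric] using K0nn knn X_pos
    by (intro add_nonneg_nonneg sum_nonneg) (auto simp: less_imp_le)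
  have "(\<integral>\<^sup>+ x. ennreal (g x) \<partial>FX) \<le> (\<integral>\<^sup>+ x. (ennreal K0 + (\<Sum>t\<in>UNIV. ennreal (k t) * ennreal (\<Sum>c\<in>UNIV. x $ c $ t))) \<partial>FX)"
  proof (rule nn_integral_mono_AE)
    show "AE x in FX. ennreal (g x) \<le> ennreal K0 + (\<Sum>t\<in>UNIV. ennreal (k t) * ennreal (\<Sum>c\<in>UNIV. x $ c $ t))"
      using AEnn
    proof eventually_elim
      case (elim x)
      have Snn: "0 \<le> (\<Sum>c\<in>UNIV. x $ c $ t)" for t using elim by (intro sum_nonneg) auto
      have "ennreal (g x) \<le> ennreal (K0 + (\<Sum>t\<in>UNIV. k t * (\<Sum>c\<in>UNIV. x $ c $ t)))"
        using gbound[OF elim] by (rule ennreal_leI)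
      also have "\<dots> = ennreal K0 + ennreal (\<Sum>t\<in>UNIV. k t * (\<Sum>c\<in>UNIV. x $ c $ t))"
      proof (rule ennreal_plus)
        show "0 \<le> K0" by (rule K0nn)
        show "0 \<le> (\<Sum>t\<in>UNIV. k t * (\<Sum>c\<in>UNIV. x $ c $ t))"
          using knn Snn elim by (intro sum_nonneg mult_nonneg_nonneg) auto
      qed
      also have "ennreal (\<Sum>t\<in>UNIV. k t * (\<Sum>c\<in>UNIV. x $ c $ t)) = (\<Sum>t\<in>UNIV. ennreal (k t * (\<Sum>c\<in>UNIV. x $ c $ t)))"
        using knn Snn elim by (intro sum_ennreal[symmetric] mult_nonneg_nonneg) auto
      also have "\<dots> = (\<Sum>t\<in>UNIV. ennreal (k t) * ennreal (\<Sum>c\<in>UNIV. x $ c $ t))"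
        using knn Snn by (intro sum.cong refl ennreal_mult)
      finally show ?case .
    qed
  qed
  also have "\<dots> = (\<integral>\<^sup>+ x. ennreal K0 \<partial>FX) + (\<integral>\<^sup>+ x. (\<Sum>t\<in>UNIV. ennreal (k t) * ennreal (\<Sum>c\<in>UNIV. x $ c $ t)) \<partial>FX)"
    using Sm by (intro nn_integral_add) auto
  also have "(\<integral>\<^sup>+ x. (\<Sum>t\<in>UNIV. ennreal (k t) * ennreal (\<Sum>c\<in>UNIV. x $ c $ t)) \<partial>FX)
      = (\<Sum>t\<in>UNIV. (\<integral>\<^sup>+ x. ennreal (k t) * ennreal (\<Sum>c\<in>UNIV. x $ c $ t) \<partial>FX))"
    using Sm by (intro nn_integral_sum) auto
  also have "\<dots> = (\<Sum>t\<in>UNIV. ennreal (k t) * (\<integral>\<^sup>+ x. ennreal (\<Sum>c\<in>UNIV. x $ c $ t) \<partial>FX))"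
    using Sm by (intro sum.cong refl nn_integral_cmult) auto
  also have "\<dots> \<le> (\<Sum>t\<in>UNIV. ennreal (k t) * ennreal (X t))"
    using EX by (intro sum_mono mult_left_mono) auto
  also have "(\<integral>\<^sup>+ x. ennreal K0 \<partial>FX) = ennreal K0"
    by (simp add: PX.emeasure_space_1)
  finally have "(\<integral>\<^sup>+ x. ennreal (g x) \<partial>FX) \<le> ennreal K0 + (\<Sum>t\<in>UNIV. ennreal (k t) * ennreal (X t))"
    by simp
  also have "\<dots> = ennreal (L \<alpha>)"
  proof -
    have "(\<Sum>t\<in>UNIV. ennreal (k t) * ennreal (X t)) = (\<Sum>t\<in>UNIV. ennreal (k t * X t))"
      using knn X_pos by (intro sum.cong refl ennreal_mult[symmetric]) (auto simp: less_imp_le)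
    also have "\<dots> = ennreal (\<Sum>t\<in>UNIV. k t * X t)"
      using knn X_pos by (intro sum_ennreal mult_nonneg_nonneg) (auto simp: less_imp_le)
    finally show ?thesis unfolding Ksum[symmetric] using K0nn knn X_pos
      by (simp add: ennreal_plus sum_nonneg less_imp_le)
  qed
  finally have nnb: "(\<integral>\<^sup>+ x. ennreal (g x) \<partial>FX) \<le> ennreal (L \<alpha>)" .
  have "payoff_X v FX FY = enn2real (\<integral>\<^sup>+ x. ennreal (g x) \<partial>FX)"
    unfolding pay using gm gnn by (intro integral_eq_nn_integral) auto
  also have "\<dots> \<le> L \<alpha>" using Lnn nnb by (rule enn2real_leI)
  finally show ?thesis .
qed
theorem lemma4:
  fixes v :: "'c::finite \<Rightarrow> real" and X Y :: "'t::finite \<Rightarrow> real" and \<alpha> :: real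
  assumes v_pos: "\<forall>c. 0 < v c" and v_sum: "(\<Sum>c\<in>UNIV. v c) = 1"
    and X_pos: "\<forall>t. 0 < X t" and Y_pos: "\<forall>t. 0 < Y t"
    and alpha_def: "\<alpha> = (\<Sum>t\<in>UNIV. Y t / X t)"
  shows "(\<forall>\<delta>\<in>{0..1}. \<forall>p\<in>prob_simplex. L \<alpha> \<le> UB X Y \<delta> p)
    \<and> (\<lambda>t. (Y t / X t) / \<alpha>) \<in> prob_simplex \<and> min \<alpha> 1 \<in> {0..1}
    \<and> UB X Y (min \<alpha> 1) (\<lambda>t. (Y t / X t) / \<alpha>) = L \<alpha>
    \<and> (\<forall>FY \<in> strategies Y.
         (\<forall>c. \<forall>u::real^'t. (\<forall>t. 0 \<le> u $ t) \<longrightarrow>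
            marginal FY c u =
              (if \<alpha> \<le> 1
               then 1 - \<alpha> + \<alpha> * (\<Sum>t\<in>UNIV. (Y t / X t) / \<alpha> * min (u $ t / (2 * v c * X t)) 1)
               else (\<Sum>t\<in>UNIV. (Y t / X t) / \<alpha> * min (u $ t / (2 * v c * X t * \<alpha>)) 1)))
         \<longrightarrow> (\<forall>FX \<in> (strategies X :: (real^'t^'c) measure set). payoff_X v FX FY \<le> L \<alpha>))"
  using alg_part[OF X_pos Y_pos alpha_def] game_part[OF v_pos v_sum X_pos Y_pos alpha_def] by blast

end
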